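(* The local complexity of the class of unit-distance graphs is $\Omega(n)$.
   Context: A unit-distance graph is a graph whose vertices are points in the plane, two points being adjacent iff their Euclidean distance equals 1. All graphs are finite, simple, connected; $n$ is the number of vertices, with distinct identifiers in $\{1,\dots,\mathrm{poly}(n)\}$. A proof labeling scheme for a class $\mathcal{G}$ consists of a prover assigning a certificate (binary word) to each vertex of each $G\in\mathcal{G}$ and a local verifier where each vertex accepts or rejects based only on identifiers and certificates in its closed neighborhood; all vertices accept when $G\in\mathcal{G}$ with the prover's certificates, and when $G\notin\mathcal{G}$ some vertex rejects for every certificate assignment. The local complexity of $\mathcal{G}$ is the minimum, over such schemes, of the maximum certificate length used on $n$-vertex graphs of $\mathcal{G}$. *)

theory Defs
  imports "HOL-Analysis.Analysis"
begin

text \<open>A graph with identifiers: the vertices are their own (distinct) identifiers,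
  i.e. a finite set V of natural numbers together with an edge relation E.\<close>

definition simple_graph :: "nat set \<Rightarrow> (nat \<Rightarrow> nat \<Rightarrow> bool) \<Rightarrow> bool" where
  "simple_graph V E \<longleftrightarrow> finite V \<and> V \<noteq> {} \<and>
     (\<forall>u v. E u v \<longrightarrow> u \<in> V \<and> v \<in> V) \<and>
     (\<forall>u v. E u v \<longrightarrow> E v u) \<and> (\<forall>v. \<not> E v v)"

definition connected_graph :: "nat set \<Rightarrow> (nat \<Rightarrow> nat \<Rightarrow> bool) \<Rightarrow> bool" where
  "connected_graph V E \<longleftrightarrow> (\<forall>u\<in>V. \<forall>v\<in>V. E\<^sup>*\<^sup>* u v)"

definition admissible :: "nat \<Rightarrow> nat set \<Rightarrow> (nat \<Rightarrow> nat \<Rightarrow> bool) \<Rightarrow> bool" where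
  "admissible k V E \<longleftrightarrow> simple_graph V E \<and> connected_graph V E \<and>
     V \<subseteq> {1..card V ^ k}"

definition unit_distance_graph :: "nat set \<Rightarrow> (nat \<Rightarrow> nat \<Rightarrow> bool) \<Rightarrow> bool" where
  "unit_distance_graph V E \<longleftrightarrow>
     (\<exists>p :: nat \<Rightarrow> real^2. inj_on p V \<and>
        (\<forall>u\<in>V. \<forall>v\<in>V. E u v \<longleftrightarrow> dist (p u) (p v) = 1))"

type_synonym verifier = "nat \<Rightarrow> bool list \<Rightarrow> (nat \<times> bool list) set \<Rightarrow> bool"
type_synonym prover = "nat set \<Rightarrow> (nat \<Rightarrow> nat \<Rightarrow> bool) \<Rightarrow> nat \<Rightarrow> bool list"

definition accepts :: "verifier \<Rightarrow> (nat \<Rightarrow> nat \<Rightarrow> bool) \<Rightarrow> (nat \<Rightarrow> bool list) \<Rightarrow> nat \<Rightarrow> bool" where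
  "accepts D E c v \<longleftrightarrow> D v (c v) {(u, c u) | u. E v u}"

definition pls_unit_distance :: "nat \<Rightarrow> verifier \<Rightarrow> prover \<Rightarrow> bool" where
  "pls_unit_distance k D P \<longleftrightarrow>
     (\<forall>V E. admissible k V E \<longrightarrow> unit_distance_graph V E \<longrightarrow>
        (\<forall>v\<in>V. accepts D E (P V E) v)) \<and>
     (\<forall>V E. admissible k V E \<longrightarrow> \<not> unit_distance_graph V E \<longrightarrow>
        (\<forall>c. \<exists>v\<in>V. \<not> accepts D E c v))"

end

theory Submission
  imports Defs
begin

definition ladj :: "int \<times> int \<Rightarrow> int \<times> int \<Rightarrow> bool" where
  "ladj z w \<longleftrightarrow> (fst z - fst w = 1 \<and> snd z = snd w) \<or> (fst z - fst w = -1 \<and> snd z = snd w)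
     \<or> (fst z = fst w \<and> snd z - snd w = 1) \<or> (fst z = fst w \<and> snd z - snd w = -1)
     \<or> (fst z - fst w = 1 \<and> snd z - snd w = -1) \<or> (fst z - fst w = -1 \<and> snd z - snd w = 1)"
lemma ladj_simp[simp]: "ladj (a,b) (c,d) \<longleftrightarrow>
   (a - c = 1 \<and> b = d) \<or> (a - c = -1 \<and> b = d) \<or> (a = c \<and> b - d = 1) \<or> (a = c \<and> b - d = -1)
   \<or> (a - c = 1 \<and> b - d = -1) \<or> (a - c = -1 \<and> b - d = 1)"
  unfolding ladj_def by simp
lemma ladj_sym: "ladj z w = ladj w z"
proof -
  obtain a b c d where "z = (a,b)" "w = (c,d)" by fastforce
  moreover have "ladj (a,b) (c,d) \<Longrightarrow> ladj (c,d) (a,b)" for a b c d :: int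
    unfolding ladj_simp by (elim disjE; simp)
  ultimately show ?thesis by blast
qed

lemma par_simps[simp]:
  fixes a b :: int
  shows "(1 + 2 * a = 2 * b) = False" "(2 * a = 1 + 2 * b) = False"
    "(2 * a - 2 * b = 1) = False" "(2 * a - 2 * b = -1) = False"
    "(2 * a + 1 = 2 * b) = False" "(2 * a = 2 * b + 1) = False"
  by presburger+

datatype role = Fx int int | AG nat nat | BG nat nat

fun pos :: "nat set \<Rightarrow> nat set \<Rightarrow> role \<Rightarrow> int \<times> int" where
  "pos X Y (Fx a b) = (a,b)"
| "pos X Y (AG i s) = (if i \<in> X then (if s = 0 then (2*int i+4,2) else if s = 1 then (2*int i+5,2) else (2*int i+4,3))
     else (if s = 0 then (2*int i+4,-1) else if s = 1 then (2*int i+5,-1) else (2*int i+5,-2)))"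
| "pos X Y (BG i s) = (if i \<notin> Y then (if s = 0 then (2*int i+4,4) else if s = 1 then (2*int i+3,4) else (2*int i+4,3))
     else (if s = 0 then (2*int i+4,7) else if s = 1 then (2*int i+3,7) else (2*int i+3,8)))"

fun sideA :: "role \<Rightarrow> bool" where
  "sideA (Fx a b) = (b \<le> 2)" | "sideA (AG i s) = True" | "sideA (BG i s) = False"

fun isFx :: "role \<Rightarrow> bool" where
  "isFx (Fx a b) = True" | "isFx (AG i s) = False" | "isFx (BG i s) = False"

definition inS :: "nat \<Rightarrow> nat \<Rightarrow> int \<Rightarrow> int \<Rightarrow> bool" where
  "inS m T a b \<longleftrightarrow> (0 \<le> a \<and> a \<le> 2*int m+3 \<and> (b=0 \<or> b=1 \<or> b=5 \<or> b=6))
     \<or> (0 \<le> a \<and> a \<le> 1 \<and> 2 \<le> b \<and> b \<le> 4) \<or> (- int T \<le> a \<and> a \<le> -1 \<and> b = 0)"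

definition RR :: "nat \<Rightarrow> nat \<Rightarrow> role set" where
  "RR m T = {Fx a b | a b. inS m T a b} \<union> {AG i s | i s. i < m \<and> s < 3} \<union> {BG i s | i s. i < m \<and> s < 3}"

lemma mem_RR[simp]: "Fx a b \<in> RR m T \<longleftrightarrow> inS m T a b" "AG i s \<in> RR m T \<longleftrightarrow> i < m \<and> s < 3"
  "BG i s \<in> RR m T \<longleftrightarrow> i < m \<and> s < 3"
  unfolding RR_def by auto

definition Hr :: "nat set \<Rightarrow> nat set \<Rightarrow> role \<Rightarrow> role \<Rightarrow> bool" where
  "Hr X Y r1 r2 \<longleftrightarrow> r1 \<noteq> r2 \<and> ladj (pos X Y r1) (pos X Y r2) \<and> (sideA r1 = sideA r2 \<or> (isFx r1 \<and> isFx r2))"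

lemma Hr_sym: "Hr X Y r1 r2 = Hr X Y r2 r1"
  unfolding Hr_def using ladj_sym by metis

lemma lt3: "(s::nat) < 3 \<longleftrightarrow> s = 0 \<or> s = 1 \<or> s = 2" by auto

lemma AG_notS: "s < 3 \<Longrightarrow> \<not> inS m T (fst (pos X Y (AG i s))) (snd (pos X Y (AG i s)))"
  unfolding lt3 by (cases "i \<in> X") (auto simp: inS_def)

lemma BG_notS: "s < 3 \<Longrightarrow> \<not> inS m T (fst (pos X Y (BG i s))) (snd (pos X Y (BG i s)))"
  unfolding lt3 by (cases "i \<in> Y") (auto simp: inS_def)

lemma AG_inj: "s < 3 \<Longrightarrow> t < 3 \<Longrightarrow> pos X Y (AG i s) = pos X Y (AG j t) \<Longrightarrow> i = j \<and> s = t"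
  unfolding lt3 by (cases "i \<in> X"; cases "j \<in> X") (auto)

lemma BG_inj: "s < 3 \<Longrightarrow> t < 3 \<Longrightarrow> pos X Y (BG i s) = pos X Y (BG j t) \<Longrightarrow> i = j \<and> s = t"
  unfolding lt3 by (cases "i \<in> Y"; cases "j \<in> Y") (auto)

lemma AG_BG_ne: "s < 3 \<Longrightarrow> t < 3 \<Longrightarrow> pos X X (AG i s) \<noteq> pos X X (BG j t)"
  unfolding lt3 by (cases "i \<in> X"; cases "j \<in> X") (auto)

lemma pos_inj: "inj_on (pos X X) (RR m T)"
proof (rule inj_onI)
  fix r1 r2 assume a: "r1 \<in> RR m T" "r2 \<in> RR m T" "pos X X r1 = pos X X r2"
  show "r1 = r2"
  proof (cases r1)
    case (Fx a b)
    then have S: "inS m T (fst (pos X X r2)) (snd (pos X X r2))" using a by (simp flip: a(3))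
    show ?thesis
    proof (cases r2)
      case (AG j t) then show ?thesis using S AG_notS[of t m T X X j] a(2) by simp
    next
      case (BG j t) then show ?thesis using S BG_notS[of t m T X X j] a(2) by simp
    qed (use a Fx in simp)
  next
    case (AG i s)
    then have S: "\<not> inS m T (fst (pos X X r2)) (snd (pos X X r2))" "s < 3"
      using a AG_notS[of s m T X X i] by (simp_all flip: a(3))
    show ?thesis
    proof (cases r2)
      case (Fx c d) then show ?thesis using S a(2) by simp
    next
      case (AG j t) then show ?thesis using AG_inj[of s t X X i j] a \<open>r1 = AG i s\<close> by simp
    next
      case (BG j t) then show ?thesis using AG_BG_ne[of s t X i j] a \<open>r1 = AG i s\<close> by simp
    qed
  next
    case (BG i s)
    then have S: "\<not> inS m T (fst (pos X X r2)) (snd (pos X X r2))" "s < 3"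
      using a BG_notS[of s m T X X i] by (simp_all flip: a(3))
    show ?thesis
    proof (cases r2)
      case (Fx c d) then show ?thesis using S a(2) by simp
    next
      case (AG j t) then show ?thesis using AG_BG_ne[of t s X j i] a \<open>r1 = BG i s\<close> by simp
    next
      case (BG j t) then show ?thesis using BG_inj[of s t X X i j] a \<open>r1 = BG i s\<close> by simp
    qed
  qed
qed

lemma FxA_BG: "inS m T a b \<Longrightarrow> b \<le> 2 \<Longrightarrow> t < 3 \<Longrightarrow> \<not> ladj (a,b) (pos X Y (BG j t))"
  unfolding lt3 by (cases "j \<in> Y") (auto simp: inS_def)

lemma AG_FxB: "inS m T a b \<Longrightarrow> \<not> b \<le> 2 \<Longrightarrow> s < 3 \<Longrightarrow> \<not> ladj (pos X Y (AG i s)) (a,b)"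
  unfolding lt3 by (cases "i \<in> X") (auto simp: inS_def)

lemma AG_BG_nadj: "s < 3 \<Longrightarrow> t < 3 \<Longrightarrow> \<not> ladj (pos X X (AG i s)) (pos X X (BG j t))"
  unfolding lt3 by (cases "i \<in> X"; cases "j \<in> X") (auto)

lemma cross_yes0:
  assumes "r1 \<in> RR m T" "r2 \<in> RR m T" "sideA r1" "\<not> sideA r2" "ladj (pos X X r1) (pos X X r2)"
  shows "isFx r1 \<and> isFx r2"
proof (cases r1)
  case (Fx a b)
  then show ?thesis using assms FxA_BG[of m T a b] by (cases r2) (auto simp del: ladj_simp)
next
  case (AG i s)
  then show ?thesis using assms AG_FxB[of m T _ _ s X Y i] AG_BG_nadj[of s _ X i]
    by (cases r2) (auto simp del: ladj_simp)
qed (use assms in auto)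

lemma cross_yes:
  assumes "r1 \<in> RR m T" "r2 \<in> RR m T" "sideA r1 \<noteq> sideA r2" "ladj (pos X X r1) (pos X X r2)"
  shows "isFx r1 \<and> isFx r2"
  using assms cross_yes0[of r1 m T r2 X] cross_yes0[of r2 m T r1 X] ladj_sym by metis

lemma Hr_yes:
  assumes "r1 \<in> RR m T" "r2 \<in> RR m T"
  shows "Hr X X r1 r2 \<longleftrightarrow> r1 \<noteq> r2 \<and> ladj (pos X X r1) (pos X X r2)"
  using cross_yes[OF assms] unfolding Hr_def by metis

lemma view:
  shows "sideA r1 \<Longrightarrow> Hr X Y r1 r2 = Hr X X r1 r2"
    and "\<not> sideA r1 \<Longrightarrow> Hr X Y r1 r2 = Hr Y Y r1 r2"
  unfolding Hr_def by (cases r1; cases r2; simp)+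

lemma bd:
  assumes "r1 \<in> RR m T" "r2 \<in> RR m T" "sideA r1 \<noteq> sideA r2" "Hr X Y r1 r2"
  shows "r2 \<in> {Fx 0 2, Fx 1 2, Fx 0 3, Fx 1 3}"
proof -
  from assms have F: "isFx r1" "isFx r2" and L: "ladj (pos X Y r1) (pos X Y r2)" unfolding Hr_def by auto
  then obtain a b c d where r: "r1 = Fx a b" "r2 = Fx c d" by (cases r1; cases r2) auto
  have D: "d = b \<or> d = b + 1 \<or> d = b - 1" using L unfolding r pos.simps ladj_simp by (elim disjE; simp)
  have d23: "d = 2 \<or> d = 3" using assms(3) D unfolding r by auto
  have "inS m T c d" using assms(2) r by simp
  then have "0 \<le> c \<and> c \<le> 1" using d23 unfolding inS_def by auto
  then have "c = 0 \<or> c = 1" by auto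
  then show ?thesis using d23 r by auto
qed

lemma S_eq: "{(a,b). inS m T a b} = ({0..2*int m+3} \<times> {0,1,5,6}) \<union> ({0..1} \<times> {2..4}) \<union> ({-int T..-1} \<times> {0})"
  unfolding inS_def by auto

lemma card_S: "card {(a,b). inS m T a b} = 8*m + 22 + T"
proof -
  have c1: "card ({0..2*int m+3} \<times> {0::int,1,5,6}) = 4*(2*m+4)"
    by (simp add: card_cartesian_product)
  have c2: "card ({0..1::int} \<times> {2..4::int}) = 6"
    by (simp add: card_cartesian_product)
  have c3: "card ({-int T..-1} \<times> {0::int}) = T"
    by (simp add: card_cartesian_product)
  have d1: "({0..2*int m+3} \<times> {0::int,1,5,6}) \<inter> ({0..1} \<times> {2..4}) = {}" by auto
  have d2: "(({0..2*int m+3} \<times> {0::int,1,5,6}) \<union> ({0..1} \<times> {2..4})) \<inter> ({-int T..-1} \<times> {0}) = {}" by auto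
  show ?thesis unfolding S_eq
    by (subst card_Un_disjoint[OF _ _ d2], simp, simp, subst card_Un_disjoint[OF _ _ d1]) (simp_all add: c1 c2 c3)
qed

lemma RR_eq: "RR m T = (\<lambda>(a,b). Fx a b) ` {(a,b). inS m T a b} \<union> (\<lambda>(i,s). AG i s) ` ({..<m} \<times> {..<3})
   \<union> (\<lambda>(i,s). BG i s) ` ({..<m} \<times> {..<3})"
  unfolding RR_def by auto

lemma finite_S: "finite {(a,b). inS m T a b}"
  unfolding S_eq by auto

lemma card_RR: "card (RR m T) = 14*m + 22 + T" and finite_RR: "finite (RR m T)"
proof -
  have i1: "inj_on (\<lambda>(a,b). Fx a b) A" for A by (auto simp: inj_on_def)
  have i2: "inj_on (\<lambda>(i,s). AG i s) A" for A by (auto simp: inj_on_def)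
  have i3: "inj_on (\<lambda>(i,s). BG i s) A" for A by (auto simp: inj_on_def)
  have c1: "card ((\<lambda>(a,b). Fx a b) ` {(a,b). inS m T a b}) = 8*m+22+T"
    using card_image[OF i1] card_S by metis
  have c2: "card ((\<lambda>(i,s). AG i s) ` ({..<m} \<times> {..<3})) = 3*m"
    using card_image[OF i2] by (simp add: card_cartesian_product)
  have c3: "card ((\<lambda>(i,s). BG i s) ` ({..<m} \<times> {..<3})) = 3*m"
    using card_image[OF i3] by (simp add: card_cartesian_product)
  have f1: "finite ((\<lambda>(a,b). Fx a b) ` {(a,b). inS m T a b})" using finite_S by blast
  have f2: "finite ((\<lambda>(i,s). AG i s) ` ({..<m} \<times> {..<3::nat}))" by blast
  have f3: "finite ((\<lambda>(i,s). BG i s) ` ({..<m} \<times> {..<3::nat}))" by blast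
  show "finite (RR m T)" unfolding RR_eq using f1 f2 f3 by blast
  show "card (RR m T) = 14*m + 22 + T" unfolding RR_eq
    apply (subst card_Un_disjoint)
       apply (use f1 f2 f3 in blast)
      apply (use f3 in blast)
     apply force
    apply (subst card_Un_disjoint)
       apply (use f1 in blast)
      apply (use f2 in blast)
     apply force
    using c1 c2 c3 by simp
qed

definition Hs :: "nat set \<Rightarrow> nat set \<Rightarrow> nat \<Rightarrow> nat \<Rightarrow> role \<Rightarrow> role \<Rightarrow> bool" where
  "Hs X Y m T r1 r2 \<longleftrightarrow> r1 \<in> RR m T \<and> r2 \<in> RR m T \<and> Hr X Y r1 r2"

lemma Hr_Fx[simp]: "Hr X Y (Fx a b) (Fx c d) \<longleftrightarrow> (a \<noteq> c \<or> b \<noteq> d) \<and> ladj (a,b) (c,d)"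
  by (auto simp: Hr_def)
lemma Hr_AG_Fx[simp]: "Hr X Y (AG i s) (Fx a b) \<longleftrightarrow> b \<le> 2 \<and> ladj (pos X Y (AG i s)) (a,b)"
  by (auto simp: Hr_def simp del: pos.simps(2,3))
lemma Hr_BG_Fx[simp]: "Hr X Y (BG i s) (Fx a b) \<longleftrightarrow> \<not> b \<le> 2 \<and> ladj (pos X Y (BG i s)) (a,b)"
  by (auto simp: Hr_def simp del: pos.simps(2,3))
lemma Hr_AG_AG[simp]: "Hr X Y (AG i s) (AG j t) \<longleftrightarrow> (i \<noteq> j \<or> s \<noteq> t) \<and> ladj (pos X Y (AG i s)) (pos X Y (AG j t))"
  by (auto simp: Hr_def simp del: pos.simps(2,3))
lemma Hr_BG_BG[simp]: "Hr X Y (BG i s) (BG j t) \<longleftrightarrow> (i \<noteq> j \<or> s \<noteq> t) \<and> ladj (pos X Y (BG i s)) (pos X Y (BG j t))"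
  by (auto simp: Hr_def simp del: pos.simps(2,3))

abbreviation "base \<equiv> Fx 0 0"

lemma step_conn: "Hs X Y m T r1 r2 \<Longrightarrow> (Hs X Y m T)\<^sup>*\<^sup>* r2 base \<Longrightarrow> (Hs X Y m T)\<^sup>*\<^sup>* r1 base"
  by (rule converse_rtranclp_into_rtranclp)

lemma conn_A: "c \<le> 2*m+3 \<Longrightarrow> (Hs X Y m T)\<^sup>*\<^sup>* (Fx (int c) 0) base \<and> (Hs X Y m T)\<^sup>*\<^sup>* (Fx (int c) 1) base"
proof (induction c)
  case 0
  have "Hs X Y m T (Fx 0 1) (Fx 0 0)" by (simp add: Hs_def inS_def)
  then show ?case using step_conn[of X Y m T "Fx 0 1" base] by simp
next
  case (Suc c)
  then have IH: "(Hs X Y m T)\<^sup>*\<^sup>* (Fx (int c) 0) base" by simp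
  have e1: "Hs X Y m T (Fx (int c + 1) 0) (Fx (int c) 0)" using Suc.prems by (simp add: Hs_def inS_def)
  have e2: "Hs X Y m T (Fx (int c + 1) 1) (Fx (int c + 1) 0)" using Suc.prems by (simp add: Hs_def inS_def)
  have "(Hs X Y m T)\<^sup>*\<^sup>* (Fx (int c + 1) 0) base" using step_conn[OF e1 IH] .
  moreover have "(Hs X Y m T)\<^sup>*\<^sup>* (Fx (int c + 1) 1) base" using step_conn[OF e2 calculation] .
  ultimately show ?case by (simp add: add.commute)
qed

lemma conn_tail: "1 \<le> t \<Longrightarrow> t \<le> T \<Longrightarrow> (Hs X Y m T)\<^sup>*\<^sup>* (Fx (- int t) 0) base"
proof (induction t rule: nat_induct_at_least)
  case base
  have "Hs X Y m T (Fx (-1) 0) (Fx 0 0)" using base by (simp add: Hs_def inS_def)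
  then show ?case using step_conn[of X Y m T "Fx (-1) 0" "Fx 0 0"] by simp
next
  case (Suc t)
  have e: "Hs X Y m T (Fx (- 1 - int t) 0) (Fx (- int t) 0)" using Suc by (simp add: Hs_def inS_def)
  show ?case using step_conn[OF e Suc.IH] Suc by simp
qed

lemma conn_con: "(Hs X Y m T)\<^sup>*\<^sup>* (Fx a b) base" if "0 \<le> a" "a \<le> 1" "2 \<le> b" "b \<le> 4"
proof -
  have A1: "(Hs X Y m T)\<^sup>*\<^sup>* (Fx 0 1) base" "(Hs X Y m T)\<^sup>*\<^sup>* (Fx 1 1) base"
    using conn_A[of 0 m X Y T] conn_A[of 1 m X Y T] by auto
  have c02: "(Hs X Y m T)\<^sup>*\<^sup>* (Fx 0 2) base"
    by (rule step_conn[OF _ A1(1)]) (simp add: Hs_def inS_def)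
  have c12: "(Hs X Y m T)\<^sup>*\<^sup>* (Fx 1 2) base"
    by (rule step_conn[OF _ A1(2)]) (simp add: Hs_def inS_def)
  have c03: "(Hs X Y m T)\<^sup>*\<^sup>* (Fx 0 3) base"
    by (rule step_conn[OF _ c02]) (simp add: Hs_def inS_def)
  have c13: "(Hs X Y m T)\<^sup>*\<^sup>* (Fx 1 3) base"
    by (rule step_conn[OF _ c12]) (simp add: Hs_def inS_def)
  have c04: "(Hs X Y m T)\<^sup>*\<^sup>* (Fx 0 4) base"
    by (rule step_conn[OF _ c03]) (simp add: Hs_def inS_def)
  have c14: "(Hs X Y m T)\<^sup>*\<^sup>* (Fx 1 4) base"
    by (rule step_conn[OF _ c13]) (simp add: Hs_def inS_def)
  have "a = 0 \<or> a = 1" "b = 2 \<or> b = 3 \<or> b = 4" using that by auto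
  then show ?thesis using c02 c12 c03 c13 c04 c14 by auto
qed

lemma conn_B: "c \<le> 2*m+3 \<Longrightarrow> (Hs X Y m T)\<^sup>*\<^sup>* (Fx (int c) 5) base \<and> (Hs X Y m T)\<^sup>*\<^sup>* (Fx (int c) 6) base"
proof (induction c)
  case 0
  have c04: "(Hs X Y m T)\<^sup>*\<^sup>* (Fx 0 4) base" using conn_con by simp
  have c05: "(Hs X Y m T)\<^sup>*\<^sup>* (Fx 0 5) base"
    by (rule step_conn[OF _ c04]) (simp add: Hs_def inS_def)
  have c06: "(Hs X Y m T)\<^sup>*\<^sup>* (Fx 0 6) base"
    by (rule step_conn[OF _ c05]) (simp add: Hs_def inS_def)
  show ?case using c05 c06 by simp
next
  case (Suc c)
  then have IH: "(Hs X Y m T)\<^sup>*\<^sup>* (Fx (int c) 5) base" by simp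
  have e1: "Hs X Y m T (Fx (int c + 1) 5) (Fx (int c) 5)" using Suc.prems by (simp add: Hs_def inS_def)
  have e2: "Hs X Y m T (Fx (int c + 1) 6) (Fx (int c + 1) 5)" using Suc.prems by (simp add: Hs_def inS_def)
  have "(Hs X Y m T)\<^sup>*\<^sup>* (Fx (int c + 1) 5) base" using step_conn[OF e1 IH] .
  moreover have "(Hs X Y m T)\<^sup>*\<^sup>* (Fx (int c + 1) 6) base" using step_conn[OF e2 calculation] .
  ultimately show ?case by (simp add: add.commute)
qed

lemma conn_Fx: "inS m T a b \<Longrightarrow> (Hs X Y m T)\<^sup>*\<^sup>* (Fx a b) base"
proof -
  assume S: "inS m T a b"
  consider (body) "0 \<le> a" "a \<le> 2*int m+3" "b=0 \<or> b=1 \<or> b=5 \<or> b=6"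
    | (con) "0 \<le> a" "a \<le> 1" "2 \<le> b" "b \<le> 4" | (tail) "- int T \<le> a" "a \<le> -1" "b = 0"
    using S unfolding inS_def by blast
  then show ?thesis
  proof cases
    case body
    define c where "c = nat a"
    have ca: "a = int c" using body(1) by (simp add: c_def)
    have "int c \<le> int (2*m+3)" using body(2) ca by simp
    then have c2: "c \<le> 2*m+3" by (simp only: of_nat_le_iff)
    have A: "(Hs X Y m T)\<^sup>*\<^sup>* (Fx a 0) base" "(Hs X Y m T)\<^sup>*\<^sup>* (Fx a 1) base"
      using conn_A[OF c2, of X Y T] ca by auto
    have B: "(Hs X Y m T)\<^sup>*\<^sup>* (Fx a 5) base" "(Hs X Y m T)\<^sup>*\<^sup>* (Fx a 6) base"
      using conn_B[OF c2, of X Y T] ca by auto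
    show ?thesis using body(3) A B by (elim disjE) simp_all
  next
    case con then show ?thesis by (rule conn_con)
  next
    case tail
    define t where "t = nat (- a)"
    have ta: "a = - int t" using tail(2) by (simp add: t_def)
    have t1: "1 \<le> t" using tail(2) by (simp add: t_def)
    have "int t \<le> int T" using tail(1) ta by simp
    then have t2: "t \<le> T" by (simp only: of_nat_le_iff)
    show ?thesis using conn_tail[OF t1 t2] ta tail(3) by simp
  qed
qed

lemma conn_AG: "i < m \<Longrightarrow> s < 3 \<Longrightarrow> (Hs X Y m T)\<^sup>*\<^sup>* (AG i s) base"
proof -
  assume im: "i < m" and s3: "s < 3"
  have F: "\<And>a b. inS m T a b \<Longrightarrow> (Hs X Y m T)\<^sup>*\<^sup>* (Fx a b) base" by (rule conn_Fx)
  show ?thesis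
  proof (cases "i \<in> X")
    case True
    have g0: "(Hs X Y m T)\<^sup>*\<^sup>* (AG i 0) base"
      by (rule step_conn[OF _ F[of "2*int i+4" 1]]) (use im True in \<open>simp_all add: Hs_def inS_def\<close>)
    have g1: "(Hs X Y m T)\<^sup>*\<^sup>* (AG i 1) base"
      by (rule step_conn[OF _ F[of "2*int i+5" 1]]) (use im True in \<open>simp_all add: Hs_def inS_def\<close>)
    have g2: "(Hs X Y m T)\<^sup>*\<^sup>* (AG i 2) base"
      by (rule step_conn[OF _ g0]) (use im True in \<open>simp_all add: Hs_def inS_def\<close>)
    show ?thesis using g0 g1 g2 s3 lt3 by auto
  next
    case False
    have g0: "(Hs X Y m T)\<^sup>*\<^sup>* (AG i 0) base"
      by (rule step_conn[OF _ F[of "2*int i+4" 0]]) (use im False in \<open>simp_all add: Hs_def inS_def\<close>)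
    have g1: "(Hs X Y m T)\<^sup>*\<^sup>* (AG i 1) base"
      by (rule step_conn[OF _ F[of "2*int i+5" 0]]) (use im False in \<open>simp_all add: Hs_def inS_def\<close>)
    have g2: "(Hs X Y m T)\<^sup>*\<^sup>* (AG i 2) base"
      by (rule step_conn[OF _ g1]) (use im False in \<open>simp_all add: Hs_def inS_def\<close>)
    show ?thesis using g0 g1 g2 s3 lt3 by auto
  qed
qed

lemma conn_BG: "i < m \<Longrightarrow> s < 3 \<Longrightarrow> (Hs X Y m T)\<^sup>*\<^sup>* (BG i s) base"
proof -
  assume im: "i < m" and s3: "s < 3"
  have F: "\<And>a b. inS m T a b \<Longrightarrow> (Hs X Y m T)\<^sup>*\<^sup>* (Fx a b) base" by (rule conn_Fx)
  show ?thesis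
  proof (cases "i \<in> Y")
    case False
    have g0: "(Hs X Y m T)\<^sup>*\<^sup>* (BG i 0) base"
      by (rule step_conn[OF _ F[of "2*int i+4" 5]]) (use im False in \<open>simp_all add: Hs_def inS_def\<close>)
    have g1: "(Hs X Y m T)\<^sup>*\<^sup>* (BG i 1) base"
      by (rule step_conn[OF _ F[of "2*int i+3" 5]]) (use im False in \<open>simp_all add: Hs_def inS_def\<close>)
    have g2: "(Hs X Y m T)\<^sup>*\<^sup>* (BG i 2) base"
      by (rule step_conn[OF _ g0]) (use im False in \<open>simp_all add: Hs_def inS_def\<close>)
    show ?thesis using g0 g1 g2 s3 lt3 by auto
  next
    case True
    have g0: "(Hs X Y m T)\<^sup>*\<^sup>* (BG i 0) base"
      by (rule step_conn[OF _ F[of "2*int i+4" 6]]) (use im True in \<open>simp_all add: Hs_def inS_def\<close>)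
    have g1: "(Hs X Y m T)\<^sup>*\<^sup>* (BG i 1) base"
      by (rule step_conn[OF _ F[of "2*int i+3" 6]]) (use im True in \<open>simp_all add: Hs_def inS_def\<close>)
    have g2: "(Hs X Y m T)\<^sup>*\<^sup>* (BG i 2) base"
      by (rule step_conn[OF _ g1]) (use im True in \<open>simp_all add: Hs_def inS_def\<close>)
    show ?thesis using g0 g1 g2 s3 lt3 by auto
  qed
qed

lemma conn_all: "r \<in> RR m T \<Longrightarrow> (Hs X Y m T)\<^sup>*\<^sup>* r base"
  by (cases r) (auto intro: conn_Fx conn_AG conn_BG)

lemma tri_real:
  fixes a1 a2 b1 b2 c1 c2 x1 x2 :: real
  assumes h: "(a1-b1)^2+(a2-b2)^2=1" "(a1-c1)^2+(a2-c2)^2=1" "(b1-c1)^2+(b2-c2)^2=1"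
    "(x1-b1)^2+(x2-b2)^2=1" "(x1-c1)^2+(x2-c2)^2=1" and ne: "\<not>(x1=a1 \<and> x2=a2)"
  shows "x1 = b1+c1-a1 \<and> x2 = b2+c2-a2"
proof -
  have 1: "(x1-a1)*(x1-(b1+c1-a1)) = 0" using h by algebra
  have 2: "(x1-a1)*(x2-(b2+c2-a2)) = 0" using h by algebra
  have 3: "(x2-a2)*(x1-(b1+c1-a1)) = 0" using h by algebra
  have 4: "(x2-a2)*(x2-(b2+c2-a2)) = 0" using h by algebra
  show ?thesis
  proof (cases "x1 = a1")
    case True
    then have "x2 \<noteq> a2" using ne by auto
    then show ?thesis using 3 4 by simp
  next
    case False
    then show ?thesis using 1 2 by simp
  qed
qed

lemma dist2_sq: "(dist (x::real^2) y)^2 = (x$1 - y$1)^2 + (x$2 - y$2)^2"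
proof -
  have "dist x y = sqrt ((dist (x$1) (y$1))^2 + (dist (x$2) (y$2))^2)"
    unfolding dist_vec_def L2_set_def by (simp add: sum_2)
  then show ?thesis by (simp add: dist_real_def)
qed

lemma dist2_one: "dist (x::real^2) y = 1 \<longleftrightarrow> (x$1 - y$1)^2 + (x$2 - y$2)^2 = 1"
proof -
  have "dist x y = 1 \<longleftrightarrow> (dist x y)^2 = 1"
  proof
    assume "(dist x y)^2 = 1"
    then show "dist x y = 1" using zero_le_dist[of x y] by (simp add: power2_eq_1_iff)
  qed simp
  then show ?thesis by (simp add: dist2_sq)
qed

lemma tri_vec:
  fixes a b c x :: "real^2"
  assumes "dist a b = 1" "dist a c = 1" "dist b c = 1" "dist x b = 1" "dist x c = 1" "x \<noteq> a"
  shows "x = b + c - a"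
proof -
  have ne: "\<not>(x$1=a$1 \<and> x$2=a$2)" using assms(6) by (metis exhaust_2 vec_eq_iff)
  have "x$1 = b$1+c$1-a$1 \<and> x$2 = b$2+c$2-a$2"
    by (rule tri_real[OF assms(1-5)[unfolded dist2_one] ne])
  then show ?thesis by (simp add: vec_eq_iff forall_2)
qed

definition phi :: "(role \<Rightarrow> real^2) \<Rightarrow> int \<times> int \<Rightarrow> real^2" where
  "phi p z = p base + of_int (fst z) *\<^sub>R (p (Fx 1 0) - p base) + of_int (snd z) *\<^sub>R (p (Fx 0 1) - p base)"

lemma phi_lin: "phi p zb + phi p zc - phi p za =
   phi p (fst zb + fst zc - fst za, snd zb + snd zc - snd za)"
  unfolding phi_def by (simp add: algebra_simps)

lemma Hr_Fx_AG[simp]: "Hr X Y (Fx a b) (AG i s) \<longleftrightarrow> b \<le> 2 \<and> ladj (a,b) (pos X Y (AG i s))"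
  by (auto simp: Hr_def simp del: pos.simps(2,3))
lemma Hr_Fx_BG[simp]: "Hr X Y (Fx a b) (BG i s) \<longleftrightarrow> \<not> b \<le> 2 \<and> ladj (a,b) (pos X Y (BG i s))"
  by (auto simp: Hr_def simp del: pos.simps(2,3))

locale realiz =
  fixes X Y :: "nat set" and m T :: nat and p :: "role \<Rightarrow> real^2"
  assumes inj: "inj_on p (RR m T)"
    and U: "\<And>r1 r2. r1 \<in> RR m T \<Longrightarrow> r2 \<in> RR m T \<Longrightarrow> Hr X Y r1 r2 \<Longrightarrow> dist (p r1) (p r2) = 1"
begin

lemma rstep:
  assumes R: "v \<in> RR m T" "a \<in> RR m T" "b \<in> RR m T" "c \<in> RR m T"
    and H: "Hr X Y v b" "Hr X Y v c" "Hr X Y a b" "Hr X Y a c" "Hr X Y b c" and va: "v \<noteq> a"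
    and P: "p a = phi p (pos X Y a)" "p b = phi p (pos X Y b)" "p c = phi p (pos X Y c)"
    and Z: "pos X Y v = (fst (pos X Y b) + fst (pos X Y c) - fst (pos X Y a), snd (pos X Y b) + snd (pos X Y c) - snd (pos X Y a))"
  shows "p v = phi p (pos X Y v)"
proof -
  have d: "dist (p a) (p b) = 1" "dist (p a) (p c) = 1" "dist (p b) (p c) = 1" "dist (p v) (p b) = 1" "dist (p v) (p c) = 1"
    using U R H by auto
  have "p v \<noteq> p a" using inj R va by (meson inj_on_eq_iff)
  then have "p v = p b + p c - p a" using tri_vec d by blast
  then show ?thesis using P Z phi_lin by metis
qed

lemma base3: "p (Fx 0 0) = phi p (0,0)" "p (Fx 1 0) = phi p (1,0)" "p (Fx 0 1) = phi p (0,1)"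
  unfolding phi_def by simp_all

lemma body:
  assumes r0: "r0 = 0 \<or> r0 = 5"
    and G: "p (Fx 0 r0) = phi p (0,r0)" "p (Fx 0 (r0+1)) = phi p (0,r0+1)" "p (Fx 1 r0) = phi p (1,r0)"
  shows "c \<le> 2*m+3 \<Longrightarrow> p (Fx (int c) r0) = phi p (int c, r0) \<and> p (Fx (int c) (r0+1)) = phi p (int c, r0+1)"
proof (induction c rule: less_induct)
  case (less c)
  have inS: "\<And>a. 0 \<le> a \<Longrightarrow> a \<le> int c \<Longrightarrow> inS m T a r0 \<and> inS m T a (r0+1)"
    using less.prems r0 unfolding inS_def by auto
  consider "c = 0" | "c = 1" | "c \<ge> 2" by linarith
  then show ?case
  proof cases
    case 1 then show ?thesis using G by simp
  next
    case 2
    have "p (Fx 1 (r0+1)) = phi p (pos X Y (Fx 1 (r0+1)))"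
      by (rule rstep[of _ "Fx 0 r0" "Fx 1 r0" "Fx 0 (r0+1)"]) (use inS[of 0] inS[of 1] G 2 in simp_all)
    then show ?thesis using G 2 by simp
  next
    case 3
    obtain d where d: "c = d + 2" using 3 by (metis add.commute le_Suc_ex)
    have IH1: "p (Fx (int d + 1) r0) = phi p (int d + 1, r0) \<and> p (Fx (int d + 1) (r0+1)) = phi p (int d + 1, r0+1)"
      using less.IH[of "d+1"] less.prems d by (simp add: add.commute)
    have IH2: "p (Fx (int d) r0) = phi p (int d, r0) \<and> p (Fx (int d) (r0+1)) = phi p (int d, r0+1)"
      using less.IH[of "d"] less.prems d by simp
    have I: "inS m T (int d) r0" "inS m T (int d) (r0+1)" "inS m T (int d + 1) r0" "inS m T (int d + 1) (r0+1)"
       "inS m T (int d + 2) r0" "inS m T (int d + 2) (r0+1)"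
      using inS[of "int d"] inS[of "int d + 1"] inS[of "int d + 2"] d by auto
    have A: "p (Fx (int d + 2) r0) = phi p (pos X Y (Fx (int d + 2) r0))"
      by (rule rstep[of _ "Fx (int d) (r0+1)" "Fx (int d + 1) r0" "Fx (int d + 1) (r0+1)"])
         (use I IH1 IH2 in simp_all)
    have B: "p (Fx (int d + 2) (r0+1)) = phi p (pos X Y (Fx (int d + 2) (r0+1)))"
      by (rule rstep[of _ "Fx (int d + 1) r0" "Fx (int d + 2) r0" "Fx (int d + 1) (r0+1)"])
         (use I IH1 A in simp_all)
    show ?thesis using A B d by (simp add: add.commute)
  qed
qed

end

context realiz begin

lemma rigid_collide:
  assumes im: "i < m" and iX: "i \<in> X" and iY: "i \<notin> Y"
  shows False
proof -
  have A: "c \<le> 2*m+3 \<Longrightarrow> p (Fx (int c) 0) = phi p (int c, 0) \<and> p (Fx (int c) 1) = phi p (int c, 1)" for c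
    using body[of 0 c] base3 by simp
  have A01: "p (Fx 0 1) = phi p (0,1)" "p (Fx 1 1) = phi p (1,1)" "p (Fx 1 0) = phi p (1,0)"
    using A[of 0] A[of 1] by auto
  have I: "inS m T 0 1" "inS m T 1 1" "inS m T 1 0" "inS m T 0 2" "inS m T 1 2" "inS m T 0 3" "inS m T 1 3"
    "inS m T 0 4" "inS m T 1 4" "inS m T 0 5" "inS m T 1 5" "inS m T 0 6" by (auto simp: inS_def)
  have c02: "p (Fx 0 2) = phi p (pos X Y (Fx 0 2))"
    by (rule rstep[of _ "Fx 1 0" "Fx 0 1" "Fx 1 1"]) (use I A01 in simp_all)
  have c12: "p (Fx 1 2) = phi p (pos X Y (Fx 1 2))"
    by (rule rstep[of _ "Fx 0 1" "Fx 0 2" "Fx 1 1"]) (use I A01 c02 in simp_all)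
  have c03: "p (Fx 0 3) = phi p (pos X Y (Fx 0 3))"
    by (rule rstep[of _ "Fx 1 1" "Fx 0 2" "Fx 1 2"]) (use I A01 c02 c12 in simp_all)
  have c13: "p (Fx 1 3) = phi p (pos X Y (Fx 1 3))"
    by (rule rstep[of _ "Fx 0 2" "Fx 1 2" "Fx 0 3"]) (use I c02 c12 c03 in simp_all)
  have c04: "p (Fx 0 4) = phi p (pos X Y (Fx 0 4))"
    by (rule rstep[of _ "Fx 1 2" "Fx 0 3" "Fx 1 3"]) (use I c12 c03 c13 in simp_all)
  have c14: "p (Fx 1 4) = phi p (pos X Y (Fx 1 4))"
    by (rule rstep[of _ "Fx 0 3" "Fx 1 3" "Fx 0 4"]) (use I c03 c13 c04 in simp_all)
  have c05: "p (Fx 0 5) = phi p (pos X Y (Fx 0 5))"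
    by (rule rstep[of _ "Fx 1 3" "Fx 0 4" "Fx 1 4"]) (use I c13 c04 c14 in simp_all)
  have c15: "p (Fx 1 5) = phi p (pos X Y (Fx 1 5))"
    by (rule rstep[of _ "Fx 0 4" "Fx 0 5" "Fx 1 4"]) (use I c04 c05 c14 in simp_all)
  have c06: "p (Fx 0 6) = phi p (pos X Y (Fx 0 6))"
    by (rule rstep[of _ "Fx 1 4" "Fx 0 5" "Fx 1 5"]) (use I c14 c05 c15 in simp_all)
  have B: "c \<le> 2*m+3 \<Longrightarrow> p (Fx (int c) 5) = phi p (int c, 5) \<and> p (Fx (int c) 6) = phi p (int c, 6)" for c
    using body[of 5 c] c05 c15 c06 by simp
  define q where "q = 2 * int i + 4"
  have qc: "q = int (2*i+4)" "q + 1 = int (2*i+5)" "q - 1 = int (2*i+3)" unfolding q_def by simp_all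
  have cl: "2*i+5 \<le> 2*m+3" "2*i+4 \<le> 2*m+3" "2*i+3 \<le> 2*m+3" using im by auto
  have PA: "p (Fx q 0) = phi p (q,0)" "p (Fx q 1) = phi p (q,1)" "p (Fx (q+1) 0) = phi p (q+1,0)" "p (Fx (q+1) 1) = phi p (q+1,1)"
    using A[OF cl(1), unfolded qc(2)[symmetric]] A[OF cl(2), unfolded qc(1)[symmetric]] by auto
  have PB: "p (Fx q 5) = phi p (q,5)" "p (Fx q 6) = phi p (q,6)" "p (Fx (q-1) 5) = phi p (q-1,5)" "p (Fx (q-1) 6) = phi p (q-1,6)"
    using B[OF cl(2), unfolded qc(1)[symmetric]] B[OF cl(3), unfolded qc(3)[symmetric]] by auto
  have IQ: "inS m T q 0" "inS m T q 1" "inS m T (q+1) 0" "inS m T (q+1) 1"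
    "inS m T q 5" "inS m T q 6" "inS m T (q-1) 5" "inS m T (q-1) 6"
    using im unfolding inS_def q_def by auto
  have posA: "pos X Y (AG i 0) = (q,2)" "pos X Y (AG i 1) = (q+1,2)" "pos X Y (AG i 2) = (q,3)"
    using iX unfolding q_def by auto
  have posB: "pos X Y (BG i 0) = (q,4)" "pos X Y (BG i 1) = (q-1,4)" "pos X Y (BG i 2) = (q,3)"
    using iY unfolding q_def by auto
  have R: "AG i 0 \<in> RR m T" "AG i 1 \<in> RR m T" "AG i 2 \<in> RR m T" "BG i 0 \<in> RR m T" "BG i 1 \<in> RR m T" "BG i 2 \<in> RR m T"
    using im by auto
  have a0: "p (AG i 0) = phi p (pos X Y (AG i 0))"
    by (rule rstep[of _ "Fx (q+1) 0" "Fx q 1" "Fx (q+1) 1"]) (use IQ PA R posA in \<open>simp_all del: pos.simps(2,3)\<close>)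
  have a1: "p (AG i 1) = phi p (pos X Y (AG i 1))"
    by (rule rstep[of _ "Fx q 1" "AG i 0" "Fx (q+1) 1"]) (use IQ PA R posA a0 in \<open>simp_all del: pos.simps(2,3)\<close>)
  have a2: "p (AG i 2) = phi p (pos X Y (AG i 2))"
    by (rule rstep[of _ "Fx (q+1) 1" "AG i 0" "AG i 1"]) (use IQ PA R posA a0 a1 in \<open>simp_all del: pos.simps(2,3)\<close>)
  have b0: "p (BG i 0) = phi p (pos X Y (BG i 0))"
    by (rule rstep[of _ "Fx (q-1) 6" "Fx q 5" "Fx (q-1) 5"]) (use IQ PB R posB in \<open>simp_all del: pos.simps(2,3)\<close>)
  have b1: "p (BG i 1) = phi p (pos X Y (BG i 1))"
    by (rule rstep[of _ "Fx q 5" "BG i 0" "Fx (q-1) 5"]) (use IQ PB R posB b0 in \<open>simp_all del: pos.simps(2,3)\<close>)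
  have b2: "p (BG i 2) = phi p (pos X Y (BG i 2))"
    by (rule rstep[of _ "Fx (q-1) 5" "BG i 0" "BG i 1"]) (use IQ PB R posB b0 b1 in \<open>simp_all del: pos.simps(2,3)\<close>)
  have "p (AG i 2) = p (BG i 2)" using a2 b2 posA posB by simp
  then have "AG i 2 = BG i 2" using inj R by (meson inj_on_eq_iff)
  then show False by simp
qed

end

lemma abs_le1: fixes b :: int assumes "b^2 \<le> 1" shows "b = -1 \<or> b = 0 \<or> b = 1"
proof -
  have "\<bar>b\<bar> \<le> 1"
  proof (rule ccontr)
    assume "\<not> \<bar>b\<bar> \<le> 1"
    then have "2 \<le> \<bar>b\<bar>" by simp
    then have "2^2 \<le> \<bar>b\<bar>^2" by (rule power_mono) simp
    then show False using assms by simp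
  qed
  then show ?thesis by auto
qed

lemma quad_form:
  fixes a b :: int
  shows "a^2 + a*b + b^2 = 1 \<longleftrightarrow> ladj (a,b) (0,0)"
    and "a^2 + a*b + b^2 = 0 \<longleftrightarrow> a = 0 \<and> b = 0"
proof -
  have id1: "4*(a^2+a*b+b^2) = (2*a+b)^2 + 3*b^2" by algebra
  have id2: "4*(a^2+a*b+b^2) = (2*b+a)^2 + 3*a^2" by algebra
  have s1: "(2*a+b)^2 \<ge> 0" "(2*b+a)^2 \<ge> 0" by simp_all
  show "a^2 + a*b + b^2 = 1 \<longleftrightarrow> ladj (a,b) (0,0)"
  proof
    assume h: "a^2 + a*b + b^2 = 1"
    have "4 = (2*a+b)^2 + 3*b^2" using id1 h by simp
    then have b4: "3*b^2 \<le> 4" using s1(1) by linarith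
    have "4 = (2*b+a)^2 + 3*a^2" using id2 h by simp
    then have a4: "3*a^2 \<le> 4" using s1(2) by linarith
    note b4 a4
    then have "b^2 \<le> 1" "a^2 \<le> 1" by linarith+
    then have "b = -1 \<or> b = 0 \<or> b = 1" "a = -1 \<or> a = 0 \<or> a = 1" using abs_le1 by blast+
    then show "ladj (a,b) (0,0)" using h by (elim disjE) simp_all
  next
    assume "ladj (a,b) (0,0)"
    then show "a^2 + a*b + b^2 = 1" by (simp only: ladj_simp) (elim disjE; simp)
  qed
  show "a^2 + a*b + b^2 = 0 \<longleftrightarrow> a = 0 \<and> b = 0"
  proof
    assume h: "a^2 + a*b + b^2 = 0"
    have "0 = (2*a+b)^2 + 3*b^2" using id1 h by simp
    then have b4: "3*b^2 \<le> 0" using s1(1) by linarith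
    have "0 = (2*b+a)^2 + 3*a^2" using id2 h by simp
    then have a4: "3*a^2 \<le> 0" using s1(2) by linarith
    note b4 a4
    then show "a = 0 \<and> b = 0" by simp
  qed simp
qed

definition emb :: "int \<times> int \<Rightarrow> real^2" where
  "emb z = vector [real_of_int (fst z) + real_of_int (snd z) / 2, real_of_int (snd z) * sqrt 3 / 2]"

lemma emb_dist_sq: "(dist (emb z) (emb w))^2 =
   real_of_int ((fst z - fst w)^2 + (fst z - fst w)*(snd z - snd w) + (snd z - snd w)^2)"
proof -
  define a where "a = real_of_int (fst z - fst w)"
  define b where "b = real_of_int (snd z - snd w)"
  have s3: "sqrt 3 * sqrt 3 = (3::real)" by simp
  have e1: "emb z $ 1 - emb w $ 1 = a + b/2" unfolding emb_def a_def b_def by (simp add: field_simps)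
  have e2: "emb z $ 2 - emb w $ 2 = b * sqrt 3 / 2" unfolding emb_def a_def b_def by (simp add: field_simps)
  have "(dist (emb z) (emb w))^2 = (a + b/2)^2 + (b * sqrt 3 / 2)^2"
    unfolding dist2_sq e1 e2 ..
  also have "\<dots> = a^2 + a*b + b^2"
    by (simp add: power2_eq_square algebra_simps s3)
  finally show ?thesis unfolding a_def b_def by simp
qed

lemma emb_dist1: "dist (emb z) (emb w) = 1 \<longleftrightarrow> ladj z w"
proof -
  obtain a b c d where zw: "z = (a,b)" "w = (c,d)" by fastforce
  have "dist (emb z) (emb w) = 1 \<longleftrightarrow> (dist (emb z) (emb w))^2 = 1"
  proof
    assume "(dist (emb z) (emb w))^2 = 1"
    then show "dist (emb z) (emb w) = 1" using zero_le_dist[of "emb z" "emb w"] by (simp add: power2_eq_1_iff)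
  qed simp
  also have "\<dots> \<longleftrightarrow> (a-c)^2 + (a-c)*(b-d) + (b-d)^2 = 1"
    unfolding emb_dist_sq zw fst_conv snd_conv of_int_eq_1_iff ..
  also have "\<dots> \<longleftrightarrow> ladj (a-c, b-d) (0,0)" by (rule quad_form(1))
  also have "\<dots> \<longleftrightarrow> ladj z w" unfolding zw by simp
  finally show ?thesis .
qed

lemma emb_inj: "emb z = emb w \<Longrightarrow> z = w"
proof -
  assume e: "emb z = emb w"
  obtain a b c d where zw: "z = (a,b)" "w = (c,d)" by fastforce
  have "real_of_int ((a-c)^2 + (a-c)*(b-d) + (b-d)^2) = 0"
    using emb_dist_sq[of z w] e zw by simp
  then have "(a-c)^2 + (a-c)*(b-d) + (b-d)^2 = 0" by (simp only: of_int_eq_0_iff)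
  then show ?thesis using quad_form(2) zw by simp
qed

lemma yes_UD_role:
  "\<exists>q::role \<Rightarrow> real^2. inj_on q (RR m T) \<and> (\<forall>r1\<in>RR m T. \<forall>r2\<in>RR m T. Hr X X r1 r2 \<longleftrightarrow> dist (q r1) (q r2) = 1)"
proof -
  define q where "q r = emb (pos X X r)" for r
  have "inj_on q (RR m T)"
    using pos_inj[of X m T] emb_inj unfolding inj_on_def q_def by blast
  moreover have "Hr X X r1 r2 \<longleftrightarrow> dist (q r1) (q r2) = 1" if r: "r1 \<in> RR m T" "r2 \<in> RR m T" for r1 r2
  proof (cases "r1 = r2")
    case True then show ?thesis using Hr_def by simp
  next
    case False then show ?thesis using Hr_yes[OF r] emb_dist1 unfolding q_def by simp
  qed
  ultimately show ?thesis by (intro exI[of _ q]) auto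
qed

lemma rtranclp_sym_rev: "(\<And>x y. R x y \<Longrightarrow> R y x) \<Longrightarrow> R\<^sup>*\<^sup>* a b \<Longrightarrow> R\<^sup>*\<^sup>* b a"
proof -
  assume s: "\<And>x y. R x y \<Longrightarrow> R y x" and ab: "R\<^sup>*\<^sup>* a b"
  from ab show "R\<^sup>*\<^sup>* b a"
  proof (induction rule: rtranclp_induct)
    case base then show ?case by simp
  next
    case (step y z)
    then show ?case using s converse_rtranclp_into_rtranclp by metis
  qed
qed

locale inst =
  fixes n m T :: nat and h :: "nat \<Rightarrow> role"
  assumes bij: "bij_betw h {1..n} (RR m T)" and n1: "1 \<le> n"
begin

abbreviation "V \<equiv> {1..n}"
definition g :: "role \<Rightarrow> nat" where "g = inv_into V h"
definition EG :: "nat set \<Rightarrow> nat set \<Rightarrow> nat \<Rightarrow> nat \<Rightarrow> bool" where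
  "EG X Y u v \<longleftrightarrow> u \<in> V \<and> v \<in> V \<and> Hr X Y (h u) (h v)"

lemma h_in: "u \<in> V \<Longrightarrow> h u \<in> RR m T" by (rule bij_betw_apply[OF bij])
lemma himg: "h ` V = RR m T" by (rule bij_betw_imp_surj_on[OF bij])
lemma g_in: "r \<in> RR m T \<Longrightarrow> g r \<in> V" unfolding g_def by (rule inv_into_into) (simp only: himg)
lemma hg: "r \<in> RR m T \<Longrightarrow> h (g r) = r" unfolding g_def by (rule f_inv_into_f) (simp only: himg)
lemma gh: "u \<in> V \<Longrightarrow> g (h u) = u" unfolding g_def by (rule inv_into_f_f[OF bij_betw_imp_inj_on[OF bij]])
lemma g_inj: "inj_on g (RR m T)"
proof (rule inj_onI)
  fix x y assume "x \<in> RR m T" "y \<in> RR m T" "g x = g y"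
  then show "x = y" using hg by metis
qed

lemma card_V: "card V = n" by simp

lemma simple: "simple_graph V (EG X Y)"
proof -
  have irr: "\<not> Hr X Y r r" for r unfolding Hr_def by simp
  show ?thesis unfolding simple_graph_def EG_def using n1 Hr_sym[of X Y] irr by auto
qed

lemma conn_transfer: "(Hs X Y m T)\<^sup>*\<^sup>* r1 r2 \<Longrightarrow> r1 \<in> RR m T \<Longrightarrow> (EG X Y)\<^sup>*\<^sup>* (g r1) (g r2)"
proof (induction rule: rtranclp_induct)
  case base then show ?case by simp
next
  case (step y z)
  have "EG X Y (g y) (g z)" using step(2) g_in hg unfolding Hs_def EG_def by auto
  then show ?case using step by (meson rtranclp.rtrancl_into_rtrancl)
qed

lemma connected: "connected_graph V (EG X Y)"
  unfolding connected_graph_def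
proof (intro ballI)
  fix u v assume uv: "u \<in> V" "v \<in> V"
  have b: "\<And>w. w \<in> V \<Longrightarrow> (EG X Y)\<^sup>*\<^sup>* w (g base)"
  proof -
    fix w assume w: "w \<in> V"
    have "(Hs X Y m T)\<^sup>*\<^sup>* (h w) base" using conn_all h_in[OF w] by blast
    then have "(EG X Y)\<^sup>*\<^sup>* (g (h w)) (g base)" using conn_transfer h_in[OF w] by blast
    then show "(EG X Y)\<^sup>*\<^sup>* w (g base)" using gh[OF w] by simp
  qed
  have "(EG X Y)\<^sup>*\<^sup>* (g base) v"
    by (rule rtranclp_sym_rev[OF _ b[OF uv(2)]]) (auto simp: EG_def Hr_sym)
  then show "(EG X Y)\<^sup>*\<^sup>* u v" using b[OF uv(1)] by simp
qed

lemma admissible: "1 \<le> k \<Longrightarrow> admissible k V (EG X Y)"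
  unfolding admissible_def using simple connected self_le_power[of n k] n1 by auto

lemma UD_yes: "unit_distance_graph V (EG X X)"
proof -
  obtain q :: "role \<Rightarrow> real^2" where q: "inj_on q (RR m T)"
    "\<forall>r1\<in>RR m T. \<forall>r2\<in>RR m T. Hr X X r1 r2 \<longleftrightarrow> dist (q r1) (q r2) = 1"
    using yes_UD_role by blast
  have "inj_on (q \<circ> h) V"
    using comp_inj_on[OF bij_betw_imp_inj_on[OF bij]] q(1) bij_betw_imp_surj_on[OF bij] by simp
  moreover have "\<forall>u\<in>V. \<forall>v\<in>V. EG X X u v \<longleftrightarrow> dist ((q \<circ> h) u) ((q \<circ> h) v) = 1"
    using q(2) h_in unfolding EG_def by auto
  ultimately show ?thesis unfolding unit_distance_graph_def by blast
qed

lemma not_UD: assumes "i < m" "i \<in> X" "i \<notin> Y" shows "\<not> unit_distance_graph V (EG X Y)"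
proof
  assume "unit_distance_graph V (EG X Y)"
  then obtain p :: "nat \<Rightarrow> real^2" where p: "inj_on p V" "\<forall>u\<in>V. \<forall>v\<in>V. EG X Y u v \<longleftrightarrow> dist (p u) (p v) = 1"
    unfolding unit_distance_graph_def by blast
  interpret realiz X Y m T "p \<circ> g"
  proof
    show "inj_on (p \<circ> g) (RR m T)"
    proof (rule comp_inj_on[OF g_inj])
      show "inj_on p (g ` RR m T)" by (rule inj_on_subset[OF p(1)]) (use g_in in blast)
    qed
    fix r1 r2 assume r: "r1 \<in> RR m T" "r2 \<in> RR m T" "Hr X Y r1 r2"
    then have "EG X Y (g r1) (g r2)" unfolding EG_def using g_in hg by simp
    then show "dist ((p \<circ> g) r1) ((p \<circ> g) r2) = 1" using p(2) g_in r by simp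
  qed
  show False by (rule rigid_collide[OF assms])
qed

end

context inst begin

lemma cross_false:
  assumes k1: "1 \<le> k" and pls: "pls_unit_distance k D P"
    and im: "i < m" and iX: "i \<in> X" and iY: "i \<notin> Y"
    and agree: "\<And>r. r \<in> {Fx 0 2, Fx 1 2, Fx 0 3, Fx 1 3} \<Longrightarrow> P V (EG X X) (g r) = P V (EG Y Y) (g r)"
  shows False
proof -
  define c where "c u = (if sideA (h u) then P V (EG X X) u else P V (EG Y Y) u)" for u
  have compl: "\<And>E. admissible k V E \<Longrightarrow> unit_distance_graph V E \<Longrightarrow> (\<forall>v\<in>V. accepts D E (P V E) v)"
    using pls unfolding pls_unit_distance_def by blast
  have sound: "\<And>E. admissible k V E \<Longrightarrow> \<not> unit_distance_graph V E \<Longrightarrow> (\<forall>c. \<exists>v\<in>V. \<not> accepts D E c v)"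
    using pls unfolding pls_unit_distance_def by blast
  have accX: "\<forall>v\<in>V. accepts D (EG X X) (P V (EG X X)) v" using compl admissible[OF k1] UD_yes by blast
  have accY: "\<forall>v\<in>V. accepts D (EG Y Y) (P V (EG Y Y)) v" using compl admissible[OF k1] UD_yes by blast
  have agr: "P V (EG X X) u = P V (EG Y Y) u" if "u \<in> V" "h u \<in> {Fx 0 2, Fx 1 2, Fx 0 3, Fx 1 3}" for u
    using agree[OF that(2)] gh[OF that(1)] by simp
  have acc: "accepts D (EG X Y) c v" if v: "v \<in> V" for v
  proof (cases "sideA (h v)")
    case True
    have e: "EG X Y v u = EG X X v u" for u unfolding EG_def using view(1)[OF True, of X Y "h u"] by simp
    have cu: "c u = P V (EG X X) u" if "EG X Y v u" for u
    proof (cases "sideA (h u)")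
      case True then show ?thesis unfolding c_def by simp
    next
      case False
      have u: "u \<in> V" "Hr X Y (h v) (h u)" using that unfolding EG_def by auto
      have "h u \<in> {Fx 0 2, Fx 1 2, Fx 0 3, Fx 1 3}"
        using bd[OF h_in[OF v] h_in[OF u(1)] _ u(2)] True False by simp
      then show ?thesis unfolding c_def using False agr[OF u(1)] by simp
    qed
    have cv: "c v = P V (EG X X) v" unfolding c_def using True by simp
    have "{(u, c u) | u. EG X Y v u} = {(u, P V (EG X X) u) | u. EG X X v u}"
      using e cu by auto
    then show ?thesis using accX v cv unfolding accepts_def by simp
  next
    case False
    have e: "EG X Y v u = EG Y Y v u" for u unfolding EG_def using view(2)[OF False, of X Y "h u"] by simp
    have cu: "c u = P V (EG Y Y) u" if "EG X Y v u" for u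
    proof (cases "sideA (h u)")
      case False then show ?thesis unfolding c_def by simp
    next
      case True
      have u: "u \<in> V" "Hr X Y (h v) (h u)" using that unfolding EG_def by auto
      have "h u \<in> {Fx 0 2, Fx 1 2, Fx 0 3, Fx 1 3}"
        using bd[OF h_in[OF v] h_in[OF u(1)] _ u(2)] True False by simp
      then show ?thesis unfolding c_def using True agr[OF u(1)] by simp
    qed
    have cv: "c v = P V (EG Y Y) v" unfolding c_def using False by simp
    have "{(u, c u) | u. EG X Y v u} = {(u, P V (EG Y Y) u) | u. EG Y Y v u}"
      using e cu by auto
    then show ?thesis using accY v cv unfolding accepts_def by simp
  qed
  obtain v where "v \<in> V" "\<not> accepts D (EG X Y) c v"
    using sound[OF admissible[OF k1] not_UD[OF im iX iY]] by blast
  then show False using acc by blast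
qed

end

lemma sum_pow2_lt: "(\<Sum>i\<le>L. (2::nat)^i) < 2^(Suc L)"
  by (induction L) auto

theorem theorem5p4:
  assumes "k \<ge> 1"
  shows "\<exists>C::real. C > 0 \<and> (\<exists>n0::nat. \<forall>(D::verifier) (P::prover) (n::nat).
           pls_unit_distance k D P \<longrightarrow> n \<ge> n0 \<longrightarrow>
           (\<exists>V E. admissible k V E \<and> card V = n \<and> unit_distance_graph V E \<and>
                  (\<exists>v\<in>V. real (length (P V E v)) \<ge> C * real n)))"
proof (intro exI[of _ "1/100"] conjI exI[of _ "1000::nat"] allI impI)
  show "(1/100::real) > 0" by simp
  fix D :: verifier and P :: prover and n :: nat
  assume pls: "pls_unit_distance k D P" and n0: "1000 \<le> n"
  show "\<exists>V E. admissible k V E \<and> card V = n \<and> unit_distance_graph V E \<and>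
                  (\<exists>v\<in>V. real (length (P V E v)) \<ge> 1/100 * real n)"
  proof (rule ccontr)
    assume H: "\<not> ?thesis"
    define m where "m = (n - 22) div 14"
    define T where "T = (n - 22) mod 14"
    have nm: "n = 14*m + 22 + T" unfolding m_def T_def using n0 by simp
    have cardR: "card (RR m T) = n" using card_RR nm by simp
    obtain h where bij: "bij_betw h {1..n} (RR m T)"
      using ex_bij_betw_nat_finite_1[OF finite_RR[of m T]] cardR by metis
    interpret inst n m T h using bij n0 by unfold_locales auto
    define L where "L = n div 100"
    have short: "length (P V (EG X X) v) \<le> L" if v: "v \<in> V" for X v
    proof -
      have "\<not> real (length (P V (EG X X) v)) \<ge> 1/100 * real n"
        using H admissible[OF assms] card_V UD_yes v by blast
      then have "100 * length (P V (EG X X) v) < n" by linarith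
      then show ?thesis unfolding L_def by linarith
    qed
    define W where "W = {xs :: bool list. set xs \<subseteq> UNIV \<and> length xs \<le> L}"
    have finW: "finite W" unfolding W_def by (rule finite_lists_length_le) simp
    have cardW: "card W < 2^(Suc L)"
      unfolding W_def using card_lists_length_le[of "UNIV :: bool set" L] sum_pow2_lt[of L] by simp
    define F where "F X = (P V (EG X X) (g (Fx 0 2)), P V (EG X X) (g (Fx 1 2)), P V (EG X X) (g (Fx 0 3)), P V (EG X X) (g (Fx 1 3)))" for X
    have gB: "g (Fx 0 2) \<in> V" "g (Fx 1 2) \<in> V" "g (Fx 0 3) \<in> V" "g (Fx 1 3) \<in> V"
      using g_in by (auto simp: inS_def)
    have Fin: "F ` Pow {..<m} \<subseteq> W \<times> W \<times> W \<times> W"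
      unfolding F_def W_def using short gB by auto
    have e1: "L * 100 + n mod 100 = n" unfolding L_def by (rule div_mult_mod_eq)
    have e2: "m * 14 + T = n - 22" unfolding m_def T_def by (rule div_mult_mod_eq)
    have e3: "T < 14" unfolding T_def by simp
    have e4: "m * 14 + T + 22 = n" using e2 n0 by simp
    have "4 * L + 4 \<le> m" using e1 e3 e4 n0 by linarith
    then have mL: "4 * Suc L \<le> m" by simp
    have notinj: "\<not> inj_on F (Pow {..<m})"
    proof
      assume inj: "inj_on F (Pow {..<m})"
      have "card (Pow {..<m}) \<le> card (W \<times> W \<times> W \<times> W)"
        by (rule card_inj_on_le[OF inj Fin]) (use finW in simp)
      also have "\<dots> = card W ^ 4" by (simp add: card_cartesian_product power4_eq_xxxx)
      also have "\<dots> < (2^(Suc L))^4" by (rule power_strict_mono[OF cardW]) simp_all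
      also have "\<dots> = 2^(4 * Suc L)" by (simp only: power_mult[symmetric] mult.commute)
      also have "\<dots> \<le> 2^m" by (rule power_increasing[OF mL]) simp
      finally show False by (simp add: card_Pow)
    qed
    then obtain X Y where XY: "X \<in> Pow {..<m}" "Y \<in> Pow {..<m}" "F X = F Y" "X \<noteq> Y"
      unfolding inj_on_def by blast
    have ag: "P V (EG X X) (g r) = P V (EG Y Y) (g r)" if "r \<in> {Fx 0 2, Fx 1 2, Fx 0 3, Fx 1 3}" for r
      using XY(3) that unfolding F_def by auto
    from XY(4) obtain i where "(i \<in> X \<and> i \<notin> Y) \<or> (i \<in> Y \<and> i \<notin> X)" by blast
    then show False
    proof
      assume i: "i \<in> X \<and> i \<notin> Y"
      then have "i < m" using XY(1) by auto
      then show False using cross_false[OF assms pls _ _ _ ag] i by blast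
    next
      assume i: "i \<in> Y \<and> i \<notin> X"
      then have "i < m" using XY(2) by auto
      then show False using cross_false[OF assms pls _ _ _ ag[symmetric]] i by blast
    qed
  qed
qed

end
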